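(* Let $u,v$ be positive integers with $uv\equiv 0\pmod{12}$ and $v\equiv 0\pmod 6$. Then $\Phi(u\times v,4,2)\le\left\lfloor\frac{u}{4}\left(\left\lfloor\frac{uv-1}{3}\left\lfloor\frac{uv-2}{2}\right\rfloor\right\rfloor-2\right)\right\rfloor$.
   Context: A 2-D $(u\times v,4,2)$-OOC is a family $\mathcal C$ of $u\times v$ $(0,1)$-matrices of Hamming weight $4$ such that for all $A=(a_{ij}),B=(b_{ij})\in\mathcal C$ and integers $r$ with $A\ne B$ or $r\not\equiv0\pmod v$, $\sum_{i,j}a_{ij}b_{i,j+r}\le 2$ (column indices mod $v$). $\Phi(u\times v,4,2)$ is the largest size of such a code. *)

theory Defs
  imports Complex_Main
begin

text \<open>A u x v (0,1)-matrix is represented by its support: a set of positions (i,j)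
  with i < u, j < v. Hamming weight = cardinality of the support.\<close>

definition matrices01 :: "nat \<Rightarrow> nat \<Rightarrow> (nat \<times> nat) set set" where
  "matrices01 u v = Pow ({0..<u} \<times> {0..<v})"

definition corr :: "nat \<Rightarrow> (nat \<times> nat) set \<Rightarrow> (nat \<times> nat) set \<Rightarrow> int \<Rightarrow> nat" where
  "corr v A B r = card {(i, j). (i, j) \<in> A \<and> (i, nat ((int j + r) mod int v)) \<in> B}"

definition is_OOC2D :: "nat \<Rightarrow> nat \<Rightarrow> nat \<Rightarrow> nat \<Rightarrow> (nat \<times> nat) set set \<Rightarrow> bool" where
  "is_OOC2D u v w lam C \<longleftrightarrow>
     C \<subseteq> matrices01 u v \<and> (\<forall>A\<in>C. card A = w) \<and>
     (\<forall>A\<in>C. \<forall>B\<in>C. \<forall>r::int. (A \<noteq> B \<or> \<not> (r mod int v = 0)) \<longrightarrow> corr v A B r \<le> lam)"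

definition Phi :: "nat \<Rightarrow> nat \<Rightarrow> nat \<Rightarrow> nat \<Rightarrow> nat" where
  "Phi u v w lam = Sup (card ` {C. is_OOC2D u v w lam C})"

end

theory Submission
  imports Defs
begin

definition shf :: "nat \<Rightarrow> nat \<Rightarrow> nat \<times> nat \<Rightarrow> nat \<times> nat" where
  "shf v s x = (fst x, (snd x + s) mod v)"

lemma shf_simp[simp]: "shf v s (a,b) = (a, (b+s) mod v)" by (simp add: shf_def)
lemma shf_fst[simp]: "fst (shf v s x) = fst x" by (simp add: shf_def)
lemma shf_snd[simp]: "snd (shf v s x) = (snd x + s) mod v" by (simp add: shf_def)

lemma shf_add: "shf v s (shf v t x) = shf v (t+s) x"
  by (cases x) (simp add: mod_add_left_eq add.assoc)

lemma shf_cong: "s mod v = t mod v \<Longrightarrow> shf v s x = shf v t x"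
  by (cases x) (simp, metis mod_add_right_eq)

lemma shf_0: "snd x < v \<Longrightarrow> shf v 0 x = x"
  by (cases x) simp

lemma shf_inv: assumes "snd x < v" "0 < v" shows "shf v (v - s mod v) (shf v s x) = x"
proof -
  have "(s + (v - s mod v)) mod v = 0 mod v"
  proof -
    have "s mod v < v" using assms by simp
    hence "(s mod v + (v - s mod v)) mod v = 0" by simp
    thus ?thesis by (simp add: mod_add_left_eq[symmetric, of s])
  qed
  hence "shf v (s + (v - s mod v)) x = shf v 0 x" by (rule shf_cong)
  thus ?thesis using assms by (simp add: shf_add shf_0)
qed

lemma shf_inj: assumes "shf v s x = shf v s y" "snd x < v" "snd y < v" "0 < v" shows "x = y"
  using shf_inv[OF assms(2,4), of s] shf_inv[OF assms(3,4), of s] assms(1) by metis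


locale ooc =
  fixes u v w :: nat and C :: "(nat \<times> nat) set set"
  assumes vw: "v = 6*w" and wpos: "0 < w" and code: "is_OOC2D u v 4 2 C"
begin

definition G :: "(nat \<times> nat) set" where "G = {0..<u} \<times> {0..<v}"

lemma vpos: "0 < v" using vw wpos by simp

lemma finG: "finite G" by (simp add: G_def)

lemma C_sub: "A \<in> C \<Longrightarrow> A \<subseteq> G"
  using code by (auto simp: is_OOC2D_def matrices01_def G_def)

lemma C_card: "A \<in> C \<Longrightarrow> card A = 4"
  using code by (auto simp: is_OOC2D_def)

lemma C_fin: "A \<in> C \<Longrightarrow> finite A"
  using C_card by (metis card.infinite zero_neq_numeral)

lemma finC: "finite C"
proof -
  have "C \<subseteq> Pow G" using C_sub by auto
  thus ?thesis using finG finite_subset by blast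
qed

lemma G_snd: "x \<in> G \<Longrightarrow> snd x < v" by (auto simp: G_def)

lemma C_snd: "A \<in> C \<Longrightarrow> y \<in> A \<Longrightarrow> snd y < v"
  using C_sub G_snd by blast

lemma shf_G: "x \<in> G \<Longrightarrow> shf v s x \<in> G"
  using vpos by (cases x) (auto simp: G_def)

lemma shf_inj_on: "inj_on (shf v s) G"
  by (meson G_snd inj_onI shf_inj vpos)

lemma key3:
  assumes A: "A \<in> C" and B: "B \<in> C" and s: "s < v" and ne: "A \<noteq> B \<or> s \<noteq> 0"
    and X: "X \<subseteq> A" "card X = 3" "shf v s ` X \<subseteq> B"
  shows False
proof -
  let ?S = "{(i, j). (i, j) \<in> A \<and> (i, nat ((int j + int s) mod int v)) \<in> B}"
  have eq: "nat ((int j + int s) mod int v) = (j + s) mod v" for j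
    by (metis nat_int of_nat_add zmod_int)
  have "X \<subseteq> ?S"
  proof
    fix x assume "x \<in> X"
    then obtain a b where x: "x = (a,b)" "(a,b) \<in> A" "shf v s (a,b) \<in> B" using X by (cases x) blast
    thus "x \<in> ?S" using eq by simp
  qed
  moreover have "finite ?S" by (rule finite_subset[OF _ C_fin[OF A]]) auto
  ultimately have c: "card X \<le> corr v A B (int s)" unfolding corr_def by (rule card_mono[rotated])
  moreover have "\<not> (int s mod int v = 0) \<or> A \<noteq> B"
    using ne s by auto
  moreover have "\<forall>A\<in>C. \<forall>B\<in>C. \<forall>r::int. (A \<noteq> B \<or> \<not> r mod int v = 0) \<longrightarrow> corr v A B r \<le> 2"
    using code unfolding is_OOC2D_def by blast
  ultimately have "corr v A B (int s) \<le> 2" using A B by blast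
  thus False using X c by simp
qed

lemma mod_diff_zero: assumes "(a + (v - b mod v)) mod v = 0" shows "a mod v = b mod v"
proof -
  have e: "(a mod v + (v - b mod v)) mod v = 0" using assms by (simp add: mod_add_left_eq)
  have b: "b mod v < v" "a mod v < v" using vpos by auto
  show ?thesis
  proof (cases "a mod v + (v - b mod v) < v")
    case True thus ?thesis using e b by simp
  next
    case False
    hence "(a mod v + (v - b mod v)) mod v = (a mod v + (v - b mod v) - v) mod v"
      by (simp add: le_mod_geq)
    also have "\<dots> = a mod v + (v - b mod v) - v" using b by simp
    finally show ?thesis using e b False by linarith
  qed
qed

lemma two3:
  assumes A: "A \<in> C" and B: "B \<in> C" and TA: "T \<subseteq> shf v a ` A" and TB: "T \<subseteq> shf v b ` B"
    and T3: "card T = 3" and ne: "A \<noteq> B \<or> a mod v \<noteq> b mod v"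
  shows False
proof -
  define X where "X = {x \<in> A. shf v a x \<in> T}"
  have img: "shf v a ` X = T" using TA unfolding X_def by blast
  have "inj_on (shf v a) X" using C_sub[OF A] by (auto simp: X_def intro: inj_on_subset[OF shf_inj_on])
  hence X3: "card X = 3" using img T3 card_image by fastforce
  define s where "s = (a + (v - b mod v)) mod v"
  have s: "s < v" using vpos by (simp add: s_def)
  have sub: "shf v s ` X \<subseteq> B"
  proof
    fix y assume "y \<in> shf v s ` X"
    then obtain x where x: "x \<in> X" "y = shf v s x" by auto
    then obtain z where z: "z \<in> B" "shf v a x = shf v b z" using TB by (auto simp: X_def)
    have zG: "z \<in> G" using C_sub[OF B] z by auto
    have "z = shf v (v - b mod v) (shf v b z)" using shf_inv[OF G_snd[OF zG] vpos, of b] by simp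
    also have "\<dots> = shf v (v - b mod v) (shf v a x)" by (rule arg_cong[OF z(2)[symmetric]])
    also have "\<dots> = shf v (a + (v - b mod v)) x" by (simp add: shf_add)
    also have "\<dots> = shf v s x" by (rule shf_cong) (simp add: s_def)
    finally show "y \<in> B" using x(2) z(1) by simp
  qed
  moreover have "A \<noteq> B \<or> s \<noteq> 0" using ne mod_diff_zero[of a b] unfolding s_def by blast
  moreover have "X \<subseteq> A" by (auto simp: X_def)
  ultimately show False using key3[OF A B s _ _ X3] by blast
qed

definition Prow :: "nat \<Rightarrow> ((nat \<times> nat) set \<times> (nat \<times> nat)) set" where
  "Prow i = {(A,y). A \<in> C \<and> y \<in> A \<and> fst y = i}"

lemma sum_Prow: "(\<Sum>i<u. card (Prow i)) = 4 * card C"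
proof -
  have eq: "Sigma C (\<lambda>A. A) = (\<Union>i<u. Prow i)"
  proof
    show "Sigma C (\<lambda>A. A) \<subseteq> (\<Union>i<u. Prow i)"
    proof
      fix z assume "z \<in> Sigma C (\<lambda>A. A)"
      then obtain A y where z: "z = (A,y)" "A \<in> C" "y \<in> A" by blast
      have "fst y < u" using subsetD[OF C_sub[OF z(2)] z(3)] by (auto simp: G_def)
      thus "z \<in> (\<Union>i<u. Prow i)" using z by (auto simp: Prow_def)
    qed
  next
    show "(\<Union>i<u. Prow i) \<subseteq> Sigma C (\<lambda>A. A)" by (auto simp: Prow_def)
  qed
  have fin: "\<forall>i\<in>{..<u}. finite (Prow i)"
  proof
    fix i
    have "Prow i \<subseteq> C \<times> G" using C_sub by (auto simp: Prow_def)
    thus "finite (Prow i)" using finC finG finite_subset by blast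
  qed
  have disj: "\<forall>i\<in>{..<u}. \<forall>j\<in>{..<u}. i \<noteq> j \<longrightarrow> Prow i \<inter> Prow j = {}"
    by (auto simp: Prow_def)
  have "card (\<Union>i<u. Prow i) = (\<Sum>i<u. card (Prow i))"
    by (rule card_UN_disjoint[OF _ fin disj]) simp
  moreover have "card (Sigma C (\<lambda>A. A)) = (\<Sum>A\<in>C. card A)"
    using finC C_fin by (simp add: card_SigmaI)
  moreover have "(\<Sum>A\<in>C. card A) = (\<Sum>A\<in>C. 4)" using C_card by simp
  ultimately show ?thesis using eq by simp
qed

end

lemma card_offdiag:
  assumes "finite S"
  shows "card {(q,x). q \<in> S \<and> x \<in> S \<and> q \<noteq> x} = card S * card S - card S"
proof -
  have eq: "{(q,x). q \<in> S \<and> x \<in> S \<and> q \<noteq> x} = S \<times> S - (\<lambda>x. (x,x)) ` S" by auto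
  have "card ((\<lambda>x. (x,x)) ` S) = card S" by (rule card_image) (auto intro: inj_onI)
  moreover have "(\<lambda>x. (x,x)) ` S \<subseteq> S \<times> S" by auto
  ultimately show ?thesis unfolding eq using assms
    by (simp add: card_Diff_subset card_cartesian_product)
qed

lemma vminus_mod_inj:
  fixes j1 j2 v :: nat
  assumes "j1 < v" "j2 < v" "(v - j1) mod v = (v - j2) mod v" shows "j1 = j2"
proof (cases "j1 = 0")
  case True
  thus ?thesis using assms by (cases "j2 = 0") auto
next
  case False
  thus ?thesis using assms by (cases "j2 = 0") auto
qed

locale ooc_row = ooc +
  fixes i :: nat
  assumes iu: "i < u" and n4: "(u*v) mod 4 = 0"
begin

definition p :: "nat \<times> nat" where "p = (i, 0)"
definition P :: "((nat \<times> nat) set \<times> (nat \<times> nat)) set" where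
  "P = {(A,y). A \<in> C \<and> y \<in> A \<and> fst y = i}"
definition blk :: "(nat \<times> nat) set \<times> (nat \<times> nat) \<Rightarrow> (nat \<times> nat) set" where
  "blk pr = shf v (v - snd (snd pr)) ` (fst pr)"
definition cov :: "(nat \<times> nat) set \<Rightarrow> bool" where
  "cov T \<longleftrightarrow> (\<exists>A\<in>C. \<exists>s. T \<subseteq> shf v s ` A)"
definition N :: "nat \<times> nat \<Rightarrow> (nat \<times> nat) set" where
  "N q = {x \<in> G. x \<noteq> p \<and> x \<noteq> q \<and> \<not> cov {p,q,x}}"

lemma pG: "p \<in> G" using iu vpos by (simp add: p_def G_def)

lemma blk_p: "pr \<in> P \<Longrightarrow> p \<in> blk pr"
proof -
  assume "pr \<in> P"
  then obtain A y where pr: "pr = (A,y)" "A \<in> C" "y \<in> A" "fst y = i" by (auto simp: P_def)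
  have "snd y < v" using G_snd[OF subsetD[OF C_sub[OF pr(2)] pr(3)]] .
  hence "shf v (v - snd y) y = p" using pr by (cases y) (simp add: p_def)
  hence "p \<in> shf v (v - snd y) ` A" using pr(3) by (metis imageI)
  thus ?thesis using pr(1) by (simp add: blk_def)
qed

lemma blk_G: "pr \<in> P \<Longrightarrow> blk pr \<subseteq> G"
  unfolding blk_def P_def using C_sub shf_G by (cases pr) fastforce

lemma blk_card: "pr \<in> P \<Longrightarrow> card (blk pr) = 4"
proof -
  assume "pr \<in> P"
  then obtain A y where pr: "pr = (A,y)" "A \<in> C" by (auto simp: P_def)
  have "inj_on (shf v (v - snd y)) A" using C_sub[OF pr(2)] by (rule inj_on_subset[OF shf_inj_on])
  thus ?thesis using pr C_card by (simp add: blk_def card_image)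
qed

lemma finP: "finite P"
proof -
  have "P \<subseteq> C \<times> G" using C_sub by (auto simp: P_def)
  thus ?thesis using finC finG finite_subset by blast
qed

lemma blk_cov: assumes "pr \<in> P" "T \<subseteq> blk pr" shows "cov T"
proof -
  have "fst pr \<in> C" using assms(1) by (auto simp: P_def)
  moreover have "T \<subseteq> shf v (v - snd (snd pr)) ` fst pr" using assms(2) by (simp add: blk_def)
  ultimately show ?thesis unfolding cov_def by blast
qed

lemma cov_blk: assumes "cov T" "p \<in> T" shows "\<exists>pr\<in>P. T \<subseteq> blk pr"
proof -
  obtain A s where As: "A \<in> C" "T \<subseteq> shf v s ` A" using assms by (auto simp: cov_def)
  then obtain y where y: "y \<in> A" "shf v s y = p" using assms by auto
  have yi: "fst y = i" using y by (metis p_def fst_conv shf_fst)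
  have jv: "snd y < v" using C_snd[OF As(1) y(1)] .
  have js: "(snd y + s) mod v = 0" using y by (metis p_def snd_conv shf_snd)
  have "(s + (v - (v - snd y) mod v)) mod v = 0"
  proof (cases "snd y = 0")
    case True thus ?thesis using js by simp
  next
    case False
    hence "(v - snd y) mod v = v - snd y" using jv by simp
    hence "s + (v - (v - snd y) mod v) = snd y + s" using jv by simp
    thus ?thesis using js by (simp add: add.commute)
  qed
  hence "s mod v = (v - snd y) mod v" by (rule mod_diff_zero)
  hence "\<And>x. shf v s x = shf v (v - snd y) x" by (rule shf_cong)
  hence "T \<subseteq> blk (A,y)" using As by (auto simp: blk_def)
  moreover have "(A,y) \<in> P" using As y yi by (simp add: P_def)
  ultimately show ?thesis by blast
qed

lemma blk_disj:
  assumes "pr1 \<in> P" "pr2 \<in> P" "pr1 \<noteq> pr2" "T \<subseteq> blk pr1" "T \<subseteq> blk pr2" "card T = 3"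
  shows False
proof -
  obtain A1 y1 where 1: "pr1 = (A1,y1)" "A1 \<in> C" "y1 \<in> A1" "fst y1 = i" using assms by (auto simp: P_def)
  obtain A2 y2 where 2: "pr2 = (A2,y2)" "A2 \<in> C" "y2 \<in> A2" "fst y2 = i" using assms by (auto simp: P_def)
  have h0: "A1 \<noteq> A2 \<or> (v - snd y1) mod v \<noteq> (v - snd y2) mod v"
  proof (rule ccontr)
    assume "\<not> ?thesis"
    hence "A1 = A2" "(v - snd y1) mod v = (v - snd y2) mod v" by auto
    moreover have "snd y1 < v" "snd y2 < v" using C_snd 1 2 by auto
    ultimately have "snd y1 = snd y2" using vminus_mod_inj by blast
    hence "y1 = y2" using 1 2 by (simp add: prod_eq_iff)
    thus False using assms(3) 1(1) 2(1) \<open>A1 = A2\<close> by simp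
  qed
  have h1: "T \<subseteq> shf v (v - snd y1) ` A1" using assms(4) 1(1) by (simp add: blk_def)
  have h2: "T \<subseteq> shf v (v - snd y2) ` A2" using assms(5) 2(1) by (simp add: blk_def)
  show False by (rule two3[OF 1(2) 2(2) h1 h2 assms(6) h0])
qed


definition S :: "(nat \<times> nat) set" where "S = G - {p}"
definition OP :: "((nat \<times> nat) \<times> (nat \<times> nat)) set" where
  "OP = {(q,x). q \<in> S \<and> x \<in> S \<and> q \<noteq> x}"
definition BP :: "(nat \<times> nat) set \<times> (nat \<times> nat) \<Rightarrow> ((nat \<times> nat) \<times> (nat \<times> nat)) set" where
  "BP pr = {(q,x). q \<in> blk pr - {p} \<and> x \<in> blk pr - {p} \<and> q \<noteq> x}"
definition Unc :: "((nat \<times> nat) \<times> (nat \<times> nat)) set" where "Unc = Sigma S N"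
definition K :: "nat \<times> nat \<Rightarrow> ((nat \<times> nat) set \<times> (nat \<times> nat)) set" where
  "K q = {pr \<in> P. q \<in> blk pr}"

lemma card_G: "card G = u * v" by (simp add: G_def)

lemma finS: "finite S" using finG by (simp add: S_def)

lemma card_S: "card S = u * v - 1" using pG finG card_G by (simp add: S_def)

lemma card_OP: "card OP = (u*v - 1) * (u*v - 1) - (u*v - 1)"
  unfolding OP_def using card_offdiag[OF finS] card_S by simp

lemma blk_fin: "pr \<in> P \<Longrightarrow> finite (blk pr)"
  using blk_G finG finite_subset by blast

lemma card_BP: assumes "pr \<in> P" shows "card (BP pr) = 6"
proof -
  have "card (blk pr - {p}) = 3" using blk_card[OF assms] blk_p[OF assms]
    by (simp add: card_Diff_singleton)
  moreover have "finite (blk pr - {p})" using blk_G[OF assms] finG finite_subset by blast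
  ultimately show ?thesis unfolding BP_def using card_offdiag[of "blk pr - {p}"] by simp
qed

lemma card3: "a \<noteq> b \<Longrightarrow> a \<noteq> c \<Longrightarrow> b \<noteq> c \<Longrightarrow> card {a,b,c} = 3" by simp

lemma card_Cov: "card (\<Union>pr\<in>P. BP pr) = 6 * card P"
proof -
  have fin: "\<forall>pr\<in>P. finite (BP pr)"
  proof
    fix pr assume "pr \<in> P"
    hence "BP pr \<subseteq> blk pr \<times> blk pr" by (auto simp: BP_def)
    moreover have "finite (blk pr)" using blk_G[OF \<open>pr \<in> P\<close>] finG finite_subset by blast
    ultimately show "finite (BP pr)" using finite_subset by blast
  qed
  have disj: "\<forall>pr1\<in>P. \<forall>pr2\<in>P. pr1 \<noteq> pr2 \<longrightarrow> BP pr1 \<inter> BP pr2 = {}"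
  proof (intro ballI impI)
    fix pr1 pr2 assume h: "pr1 \<in> P" "pr2 \<in> P" "pr1 \<noteq> pr2"
    show "BP pr1 \<inter> BP pr2 = {}"
    proof (rule ccontr)
      assume "BP pr1 \<inter> BP pr2 \<noteq> {}"
      then obtain q x where qx: "(q,x) \<in> BP pr1" "(q,x) \<in> BP pr2" by auto
      have T1: "{p,q,x} \<subseteq> blk pr1" using qx(1) blk_p[OF h(1)] by (auto simp: BP_def)
      have T2: "{p,q,x} \<subseteq> blk pr2" using qx(2) blk_p[OF h(2)] by (auto simp: BP_def)
      have "card {p,q,x} = 3" using qx(1) by (intro card3) (auto simp: BP_def)
      thus False using blk_disj[OF h T1 T2] by blast
    qed
  qed
  have "card (\<Union>pr\<in>P. BP pr) = (\<Sum>pr\<in>P. card (BP pr))"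
    by (rule card_UN_disjoint[OF finP fin disj])
  also have "\<dots> = (\<Sum>pr\<in>P. 6)" using card_BP by simp
  finally show ?thesis by simp
qed

lemma Cov_Unc: "card (\<Union>pr\<in>P. BP pr) + card Unc \<le> card OP"
proof -
  have d: "(\<Union>pr\<in>P. BP pr) \<inter> Unc = {}"
  proof (rule ccontr)
    assume "(\<Union>pr\<in>P. BP pr) \<inter> Unc \<noteq> {}"
    then obtain pr z where h0: "pr \<in> P" "z \<in> BP pr" "z \<in> Unc" by blast
    obtain q x where "z = (q,x)" by (cases z)
    hence h: "pr \<in> P" "(q,x) \<in> BP pr" "(q,x) \<in> Unc" using h0 by auto
    have "{p,q,x} \<subseteq> blk pr" using h(2) blk_p[OF h(1)] by (auto simp: BP_def)
    hence "cov {p,q,x}" by (rule blk_cov[OF h(1)])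
    thus False using h(3) by (auto simp: Unc_def N_def)
  qed
  have s1: "(\<Union>pr\<in>P. BP pr) \<subseteq> OP"
  proof
    fix z assume "z \<in> (\<Union>pr\<in>P. BP pr)"
    then obtain pr where "pr \<in> P" "z \<in> BP pr" by blast
    thus "z \<in> OP" using blk_G[OF \<open>pr \<in> P\<close>] by (auto simp: BP_def OP_def S_def)
  qed
  have s2: "Unc \<subseteq> OP" by (auto simp: Unc_def OP_def N_def S_def)
  have "OP \<subseteq> S \<times> S" by (auto simp: OP_def)
  hence fOP: "finite OP" using finS finite_subset by blast
  have "card (\<Union>pr\<in>P. BP pr) + card Unc = card ((\<Union>pr\<in>P. BP pr) \<union> Unc)"
    using d fOP s1 s2 finite_subset by (subst card_Un_disjoint) auto
  also have "\<dots> \<le> card OP" using s1 s2 fOP by (intro card_mono) auto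
  finally show ?thesis .
qed

lemma N_card: assumes q: "q \<in> S" shows "card (N q) + 2 * card (K q) = u * v - 2"
proof -
  define Cq where "Cq = (\<Union>pr\<in>K q. blk pr - {p,q})"
  have qG: "q \<in> G" "q \<noteq> p" using q by (auto simp: S_def)
  have eq: "G - {p,q} = N q \<union> Cq"
  proof
    show "G - {p,q} \<subseteq> N q \<union> Cq"
    proof
      fix x assume x: "x \<in> G - {p,q}"
      show "x \<in> N q \<union> Cq"
      proof (cases "cov {p,q,x}")
        case True
        then obtain pr where "pr \<in> P" "{p,q,x} \<subseteq> blk pr" using cov_blk by blast
        hence "x \<in> Cq" using x unfolding Cq_def K_def by blast
        thus ?thesis by blast
      next
        case False thus ?thesis using x by (auto simp: N_def)
      qed
    qed
  next
    show "N q \<union> Cq \<subseteq> G - {p,q}"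
      using blk_G by (auto simp: N_def Cq_def K_def)
  qed
  have d: "N q \<inter> Cq = {}"
  proof (rule ccontr)
    assume "N q \<inter> Cq \<noteq> {}"
    then obtain x pr where h: "x \<in> N q" "pr \<in> K q" "x \<in> blk pr" unfolding Cq_def by blast
    have "pr \<in> P" "q \<in> blk pr" using h(2) by (auto simp: K_def)
    hence "{p,q,x} \<subseteq> blk pr" using h blk_p by auto
    hence "cov {p,q,x}" by (rule blk_cov[OF \<open>pr \<in> P\<close>])
    thus False using h(1) by (auto simp: N_def)
  qed
  have finK: "finite (K q)" using finP by (simp add: K_def)
  have fin: "\<forall>pr\<in>K q. finite (blk pr - {p,q})"
    using blk_fin by (auto simp: K_def)
  have disj: "\<forall>pr1\<in>K q. \<forall>pr2\<in>K q. pr1 \<noteq> pr2 \<longrightarrow> (blk pr1 - {p,q}) \<inter> (blk pr2 - {p,q}) = {}"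
  proof (intro ballI impI)
    fix pr1 pr2 assume h: "pr1 \<in> K q" "pr2 \<in> K q" "pr1 \<noteq> pr2"
    show "(blk pr1 - {p,q}) \<inter> (blk pr2 - {p,q}) = {}"
    proof (rule ccontr)
      assume "(blk pr1 - {p,q}) \<inter> (blk pr2 - {p,q}) \<noteq> {}"
      then obtain x where x: "x \<in> blk pr1" "x \<in> blk pr2" "x \<noteq> p" "x \<noteq> q" by auto
      have P12: "pr1 \<in> P" "pr2 \<in> P" using h by (auto simp: K_def)
      have T1: "{p,q,x} \<subseteq> blk pr1" using x h blk_p[OF P12(1)] by (auto simp: K_def)
      have T2: "{p,q,x} \<subseteq> blk pr2" using x h blk_p[OF P12(2)] by (auto simp: K_def)
      have "card {p,q,x} = 3" using x qG by (intro card3) auto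
      thus False using blk_disj[OF P12 h(3) T1 T2] by blast
    qed
  qed
  have c2: "\<forall>pr\<in>K q. card (blk pr - {p,q}) = 2"
  proof
    fix pr assume h: "pr \<in> K q"
    hence P1: "pr \<in> P" "q \<in> blk pr" by (auto simp: K_def)
    have "{p,q} \<subseteq> blk pr" using P1 blk_p by auto
    moreover have "finite (blk pr)" using blk_G[OF P1(1)] finG finite_subset by blast
    ultimately have "card (blk pr - {p,q}) = card (blk pr) - card {p,q}" by (meson card_Diff_subset finite_subset)
    thus "card (blk pr - {p,q}) = 2" using blk_card[OF P1(1)] qG by simp
  qed
  have "card Cq = (\<Sum>pr\<in>K q. card (blk pr - {p,q}))"
    unfolding Cq_def by (rule card_UN_disjoint[OF finK fin disj])
  also have "\<dots> = 2 * card (K q)" using c2 by simp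
  finally have cC: "card Cq = 2 * card (K q)" .
  have "card (G - {p,q}) = u * v - 2" using qG pG finG card_G by (simp add: card_Diff_subset)
  moreover have "card (G - {p,q}) = card (N q) + card Cq"
    unfolding eq using d eq finG by (subst card_Un_disjoint) (auto intro: finite_subset)
  ultimately show ?thesis using cC by simp
qed


lemma nge: "6 \<le> u * v"
proof -
  have "1 \<le> u" using iu by simp
  hence "v \<le> u * v" by simp
  thus ?thesis using vw wpos by simp
qed

lemma N_S: "x \<in> N q \<Longrightarrow> x \<in> S" by (auto simp: N_def S_def)
lemma N_ne: "x \<in> N q \<Longrightarrow> x \<noteq> q" by (auto simp: N_def)

lemma N_sym: assumes "q \<in> S" "x \<in> N q" shows "q \<in> N x"
proof -
  have "{p,x,q} = {p,q,x}" by auto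
  thus ?thesis using assms by (auto simp: N_def S_def)
qed

lemma N_fin: "finite (N q)" using finG by (simp add: N_def)

lemma N_even: assumes "q \<in> S" shows "even (card (N q))"
proof -
  have "card (N q) + 2 * card (K q) = u * v - 2" by (rule N_card[OF assms])
  moreover have "even (u * v)" using n4 by presburger
  ultimately show ?thesis using nge by presburger
qed

lemma N_other: assumes "q \<in> S" "y \<in> N q" shows "\<exists>z\<in>N q. z \<noteq> y"
proof (rule ccontr)
  assume "\<not> ?thesis"
  hence "N q \<subseteq> {y}" by blast
  hence "N q = {y}" using assms(2) by blast
  hence "card (N q) = 1" by simp
  thus False using N_even[OF assms(1)] by simp
qed

lemma shf_back: assumes "x \<in> G" "c \<le> v" shows "shf v c (shf v (v - c) x) = x"
proof -
  have "shf v c (shf v (v - c) x) = shf v v x" using assms by (simp add: shf_add)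
  also have "\<dots> = shf v 0 x" by (rule shf_cong) simp
  also have "\<dots> = x" using G_snd[OF assms(1)] by (rule shf_0)
  finally show ?thesis .
qed

lemma cov_shift: assumes "cov T" shows "cov (shf v c ` T)"
proof -
  obtain A s where As: "A \<in> C" "T \<subseteq> shf v s ` A" using assms by (auto simp: cov_def)
  have "shf v c ` T \<subseteq> shf v c ` shf v s ` A" using As(2) by (rule image_mono)
  also have "\<dots> = shf v (s + c) ` A" by (auto simp: image_image shf_add)
  finally show ?thesis using As(1) by (auto simp: cov_def)
qed

lemma shift_rule:
  assumes c: "c < v" and x: "x \<in> N (i,c)"
  shows "shf v (v - c) x \<in> N (i, v - c)"
proof -
  have xG: "x \<in> G" "x \<noteq> p" "x \<noteq> (i,c)" "\<not> cov {p,(i,c),x}" using x by (auto simp: N_def)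
  let ?x = "shf v (v - c) x"
  have hback: "shf v c ?x = x" using shf_back[OF xG(1)] c by simp
  have "?x \<in> G" using shf_G[OF xG(1)] .
  moreover have "?x \<noteq> p"
  proof
    assume "?x = p"
    hence "x = shf v c p" using hback by simp
    thus False using xG(3) c by (simp add: p_def)
  qed
  moreover have "?x \<noteq> (i, v - c)"
  proof
    assume "?x = (i, v - c)"
    hence "x = shf v c (i, v - c)" using hback by simp
    thus False using xG(2) c by (simp add: p_def)
  qed
  moreover have "\<not> cov {p, (i, v - c), ?x}"
  proof
    assume "cov {p, (i, v - c), ?x}"
    hence "cov (shf v c ` {p, (i, v - c), ?x})" by (rule cov_shift)
    moreover have "shf v c ` {p, (i, v - c), ?x} = {p, (i,c), x}"
      using hback c by (auto simp: p_def)
    ultimately show False using xG(4) by simp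
  qed
  ultimately show ?thesis by (simp add: N_def)
qed


lemma mod_shift_ne: assumes "0 < t" "t < v" "(s + t) mod v = s mod v" shows False
proof -
  have e: "(s mod v + t) mod v = s mod v" using assms(3) by (simp add: mod_add_left_eq)
  have b: "s mod v < v" using vpos by simp
  show False
  proof (cases "s mod v + t < v")
    case True thus False using e assms by simp
  next
    case False
    hence "(s mod v + t) mod v = (s mod v + t - v) mod v" by (simp add: le_mod_geq)
    also have "\<dots> = s mod v + t - v" using b assms(2) by (intro mod_less) linarith
    finally show False using e assms False by linarith
  qed
qed

lemma cellS: assumes "0 < k" "k < 6" shows "(i, k*w) \<in> S"
proof -
  have "k * w < 6 * w" using assms wpos by simp
  hence "k * w < v" using vw by simp
  moreover have "k * w \<noteq> 0" using assms wpos by simp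
  ultimately show ?thesis unfolding S_def G_def p_def using iu by auto
qed

lemma P_G: assumes "pr \<in> P" shows "snd pr \<in> G"
proof -
  obtain A y where h: "pr = (A,y)" "A \<in> C" "y \<in> A" using assms by (auto simp: P_def)
  show ?thesis using subsetD[OF C_sub[OF h(2)] h(3)] h(1) by simp
qed

definition K3 where "K3 = K (i, 3*w)"

lemma K3_char: "pr \<in> K3 \<longleftrightarrow> pr \<in> P \<and> shf v (3*w) (snd pr) \<in> fst pr"
proof (cases "pr \<in> P")
  case False thus ?thesis by (simp add: K3_def K_def)
next
  case True
  then obtain A y where pr: "pr = (A,y)" "A \<in> C" "y \<in> A" "fst y = i" by (auto simp: P_def)
  obtain j where y: "y = (i,j)" using pr(4) by (cases y) auto
  have jv: "j < v" using C_snd[OF pr(2,3)] y by simp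
  show ?thesis
  proof
    assume "pr \<in> K3"
    hence "(i, 3*w) \<in> shf v (v - j) ` A" using pr y by (simp add: K3_def K_def blk_def)
    then obtain z where z: "z \<in> A" "shf v (v - j) z = (i, 3*w)" by (metis imageE)
    have "z = shf v j (shf v (v - j) z)" using shf_back[OF subsetD[OF C_sub[OF pr(2)] z(1)]] jv by simp
    also have "\<dots> = shf v (3*w) y" using z(2) y by (simp add: add.commute)
    finally show "pr \<in> P \<and> shf v (3*w) (snd pr) \<in> fst pr" using True pr z(1) by simp
  next
    assume "pr \<in> P \<and> shf v (3*w) (snd pr) \<in> fst pr"
    hence zA: "shf v (3*w) y \<in> A" using pr by simp
    have "shf v (v - j) (shf v (3*w) y) = shf v (3*w + (v - j)) y" by (simp add: shf_add)
    also have "\<dots> = (i, (3*w + v) mod v)" using y jv by simp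
    also have "\<dots> = (i, 3*w)" using vw wpos by simp
    finally have "(i, 3*w) \<in> shf v (v - j) ` A" using zA by (metis imageI)
    thus "pr \<in> K3" using True pr y by (simp add: K3_def K_def blk_def)
  qed
qed

lemma shf33: "x \<in> G \<Longrightarrow> shf v (3*w) (shf v (3*w) x) = x"
  using shf_back[of x "3*w"] vw by simp

lemma K3_even: "even (card K3)"
proof -
  define f where "f pr = (fst pr, shf v (3*w) (snd pr))" for pr :: "(nat \<times> nat) set \<times> (nat \<times> nat)"
  define Ka where "Ka = {pr \<in> K3. snd (snd pr) < 3*w}"
  define Kb where "Kb = {pr \<in> K3. \<not> snd (snd pr) < 3*w}"
  have KP: "K3 \<subseteq> P" using K3_char by blast
  have finK: "finite K3" using finP KP finite_subset by blast
  have fK: "f pr \<in> K3" if "pr \<in> K3" for pr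
  proof -
    have h: "pr \<in> P" "shf v (3*w) (snd pr) \<in> fst pr" using that K3_char by auto
    then obtain A y where pr: "pr = (A,y)" "A \<in> C" "y \<in> A" "fst y = i" by (auto simp: P_def)
    have yG: "y \<in> G" using C_sub pr by auto
    have "f pr \<in> P" using h pr by (simp add: f_def P_def)
    moreover have "shf v (3*w) (snd (f pr)) \<in> fst (f pr)"
      using pr shf33[OF yG] by (simp add: f_def)
    ultimately show ?thesis using K3_char by blast
  qed
  have inj: "inj_on f K3"
  proof (rule inj_onI)
    fix a b assume ab: "a \<in> K3" "b \<in> K3" "f a = f b"
    have "snd a \<in> G" "snd b \<in> G" using P_G[OF subsetD[OF KP ab(1)]] P_G[OF subsetD[OF KP ab(2)]] by auto
    moreover have "shf v (3*w) (snd a) = shf v (3*w) (snd b)" "fst a = fst b" using ab(3) by (auto simp: f_def)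
    ultimately show "a = b" using shf_inj G_snd vpos by (metis prod_eq_iff)
  qed
  have snd_lt: "snd pr < v" if "pr \<in> G" for pr using G_snd that .
  have ab: "f ` Ka \<subseteq> Kb"
  proof
    fix z assume "z \<in> f ` Ka"
    then obtain pr where pr: "pr \<in> K3" "snd (snd pr) < 3*w" "z = f pr" by (auto simp: Ka_def)
    have "snd (snd z) = (snd (snd pr) + 3*w) mod (6*w)" using pr vw by (simp add: f_def)
    also have "\<dots> = snd (snd pr) + 3*w" using pr(2) by simp
    finally show "z \<in> Kb" using fK pr by (simp add: Kb_def)
  qed
  have ba: "f ` Kb \<subseteq> Ka"
  proof
    fix z assume "z \<in> f ` Kb"
    then obtain pr where pr: "pr \<in> K3" "\<not> snd (snd pr) < 3*w" "z = f pr" by (auto simp: Kb_def)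
    have "snd pr \<in> G" using P_G[OF subsetD[OF KP pr(1)]] .
    hence lt: "snd (snd pr) < 6*w" using G_snd vw by simp
    have "snd (snd z) = (snd (snd pr) + 3*w) mod (6*w)" using pr vw by (simp add: f_def)
    also have "\<dots> = snd (snd pr) + 3*w - 6*w" using pr(2) lt by (simp add: mod_if)
    finally show "z \<in> Ka" using fK pr lt by (simp add: Ka_def)
  qed
  have finA: "finite Ka" "finite Kb" using finK by (auto simp: Ka_def Kb_def)
  have "card Ka \<le> card Kb"
    by (rule card_inj_on_le[OF inj_on_subset[OF inj] ab finA(2)]) (auto simp: Ka_def)
  moreover have "card Kb \<le> card Ka"
    by (rule card_inj_on_le[OF inj_on_subset[OF inj] ba finA(1)]) (auto simp: Kb_def)
  moreover have "K3 = Ka \<union> Kb" "Ka \<inter> Kb = {}" by (auto simp: Ka_def Kb_def)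
  ultimately have "card K3 = 2 * card Ka" using finA by (simp add: card_Un_disjoint)
  thus ?thesis by simp
qed

lemma N3_ne: "N (i, 3*w) \<noteq> {}"
proof
  assume e: "N (i, 3*w) = {}"
  have "card (N (i,3*w)) + 2 * card K3 = u * v - 2"
    unfolding K3_def by (rule N_card[OF cellS]) auto
  hence "2 * card K3 = u * v - 2" using e by simp
  moreover obtain t where "card K3 = 2 * t" using K3_even by blast
  ultimately have "4 * t = u * v - 2" by simp
  thus False using n4 nge by presburger
qed

lemma L5: "(i, 4*w) \<in> N (i, 2*w)"
proof -
  let ?T = "{p, (i, 2*w), (i, 4*w)}"
  have "\<not> cov ?T"
  proof
    assume "cov ?T"
    then obtain A s where As: "A \<in> C" "?T \<subseteq> shf v s ` A" by (auto simp: cov_def)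
    have "shf v (2*w) ` ?T = ?T"
    proof -
      have "shf v (2*w) p = (i, 2*w)" using vw wpos by (simp add: p_def)
      moreover have "shf v (2*w) (i, 2*w) = (i, 4*w)" using vw wpos by simp
      moreover have "shf v (2*w) (i, 4*w) = p" using vw wpos by (simp add: p_def)
      ultimately show ?thesis by auto
    qed
    hence "?T \<subseteq> shf v (2*w) ` shf v s ` A" using As(2) by (metis image_mono)
    also have "\<dots> = shf v (s + 2*w) ` A" by (auto simp: image_image shf_add)
    finally have T2: "?T \<subseteq> shf v (s + 2*w) ` A" .
    have c3: "card ?T = 3" using vw wpos by (simp add: p_def)
    have "s mod v \<noteq> (s + 2*w) mod v"
    proof
      assume "s mod v = (s + 2*w) mod v"
      thus False using mod_shift_ne[of "2*w" s] vw wpos by simp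
    qed
    thus False using two3[OF As(1) As(1) As(2) T2 c3] by blast
  qed
  moreover have "(i, 4*w) \<in> G" "(i,4*w) \<noteq> p" "(i,4*w) \<noteq> (i,2*w)"
    using cellS[of 4] wpos by (auto simp: S_def)
  ultimately show ?thesis by (simp add: N_def)
qed


lemma c1S: "(i, w) \<in> S" using cellS[of 1] by simp
lemma c2S: "(i, 2*w) \<in> S" using cellS[of 2] by simp
lemma c3S: "(i, 3*w) \<in> S" using cellS[of 3] by simp
lemma c4S: "(i, 4*w) \<in> S" using cellS[of 4] by simp
lemma c5S: "(i, 5*w) \<in> S" using cellS[of 5] by simp

lemma sh3_1: "shf v (3*w) (i, w) = (i, 4*w)" using vw wpos by (simp add: mod_if)
lemma sh3_2: "shf v (3*w) (i, 2*w) = (i, 5*w)" using vw wpos by (simp add: mod_if)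
lemma sh3_4: "shf v (3*w) (i, 4*w) = (i, w)" using vw wpos by (simp add: mod_if)
lemma sh3_5: "shf v (3*w) (i, 5*w) = (i, 2*w)" using vw wpos by (simp add: mod_if)

lemma d1: "x \<in> N (i,3*w) \<Longrightarrow> shf v (3*w) x \<in> N (i,3*w)"
proof -
  assume "x \<in> N (i,3*w)"
  moreover have "3*w < v" "v - 3*w = 3*w" using vw wpos by auto
  ultimately show ?thesis using shift_rule[of "3*w" x] by simp
qed

lemma d2: "(i,5*w) \<in> N (i,4*w) \<Longrightarrow> (i,w) \<in> N (i,2*w)"
proof -
  assume a: "(i,5*w) \<in> N (i,4*w)"
  have "4*w < v" "v - 4*w = 2*w" using vw wpos by auto
  moreover have "shf v (2*w) (i,5*w) = (i,w)" using vw wpos by (simp add: mod_if)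
  ultimately show ?thesis using shift_rule[of "4*w" "(i,5*w)"] a by simp
qed

lemma d3: "(i,w) \<in> N (i,2*w) \<Longrightarrow> (i,5*w) \<in> N (i,4*w)"
proof -
  assume a: "(i,w) \<in> N (i,2*w)"
  have "2*w < v" "v - 2*w = 4*w" using vw wpos by auto
  moreover have "shf v (4*w) (i,w) = (i,5*w)" using vw wpos by (simp add: mod_if)
  ultimately show ?thesis using shift_rule[of "2*w" "(i,w)"] a by simp
qed

lemma five_of:
  assumes "distinct [x1,x2,x3,x4,x5]" "set [x1,x2,x3,x4,x5] \<subseteq> S"
    "\<forall>q\<in>set [x1,x2,x3,x4,x5]. N q \<noteq> {}"
  shows "\<exists>V\<subseteq>S. 5 \<le> card V \<and> (\<forall>q\<in>V. N q \<noteq> {})"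
proof (rule exI[of _ "set [x1,x2,x3,x4,x5]"])
  have "card (set [x1,x2,x3,x4,x5]) = 5" using assms(1) by (simp only: distinct_card) simp
  thus "set [x1,x2,x3,x4,x5] \<subseteq> S \<and> 5 \<le> card (set [x1,x2,x3,x4,x5]) \<and> (\<forall>q\<in>set [x1,x2,x3,x4,x5]. N q \<noteq> {})"
    using assms(2,3) by simp
qed

lemma five_of':
  assumes "distinct [x1,x2,x3,x4,x5]" "set [x1,x2,x3,x4,x5] \<subseteq> S"
    "N x1 \<noteq> {}" "N x2 \<noteq> {}" "N x3 \<noteq> {}" "N x4 \<noteq> {}" "N x5 \<noteq> {}"
  shows "\<exists>V\<subseteq>S. 5 \<le> card V \<and> (\<forall>q\<in>V. N q \<noteq> {})"
  by (rule five_of[OF assms(1,2)]) (use assms(3-7) in simp)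

lemma five: "\<exists>V\<subseteq>S. 5 \<le> card V \<and> (\<forall>q\<in>V. N q \<noteq> {})"
proof -
  have dc: "(i, k*w) \<noteq> (i, l*w)" if "k \<noteq> l" for k l using that wpos by simp
  have d12: "(i,w) \<noteq> (i,2*w)" and d13: "(i,w) \<noteq> (i,3*w)" and d14: "(i,w) \<noteq> (i,4*w)"
    and d15: "(i,w) \<noteq> (i,5*w)" using dc[of 1] by auto
  have d23: "(i,2*w) \<noteq> (i,3*w)" and d24: "(i,2*w) \<noteq> (i,4*w)" and d25: "(i,2*w) \<noteq> (i,5*w)"
    and d34: "(i,3*w) \<noteq> (i,4*w)" and d35: "(i,3*w) \<noteq> (i,5*w)" and d45: "(i,4*w) \<noteq> (i,5*w)"
    using dc by auto
  note dd = d12 d13 d14 d15 d23 d24 d25 d34 d35 d45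
  have ne: "N q \<noteq> {}" if "y \<in> N q" for q y using that by blast
  have L5': "(i,2*w) \<in> N (i,4*w)" using N_sym[OF c2S L5] .
  have n2: "N (i,2*w) \<noteq> {}" using ne[OF L5] .
  have n3: "N (i,3*w) \<noteq> {}" using N3_ne .
  have n4': "N (i,4*w) \<noteq> {}" using ne[OF L5'] .
  obtain a where a: "a \<in> N (i,3*w)" using N3_ne by blast
  define b where "b = shf v (3*w) a"
  have b: "b \<in> N (i,3*w)" using d1[OF a] by (simp add: b_def)
  have aS: "a \<in> S" "a \<noteq> (i,3*w)" using N_S[OF a] N_ne[OF a] by auto
  have bS: "b \<in> S" "b \<noteq> (i,3*w)" using N_S[OF b] N_ne[OF b] by auto
  have aG: "a \<in> G" using aS by (simp add: S_def)
  have ba: "shf v (3*w) b = a" using shf33[OF aG] by (simp add: b_def)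
  show ?thesis
  proof (cases "a \<in> {(i,w), (i,2*w), (i,4*w), (i,5*w)}")
    case False
    have "b \<noteq> (i,2*w)" using False ba sh3_2 by auto
    moreover have "b \<noteq> (i,4*w)" using False ba sh3_4 by auto
    moreover have "b \<noteq> a"
    proof
      assume "b = a"
      hence "(snd a + 3*w) mod v = snd a" by (metis b_def shf_snd)
      hence "(snd a + 3*w) mod v = snd a mod v" using G_snd[OF aG] by simp
      thus False using mod_shift_ne[of "3*w" "snd a"] vw wpos by simp
    qed
    ultimately have "distinct [(i,2*w), (i,3*w), (i,4*w), a, b]" using False aS bS dd by auto
    moreover have "set [(i,2*w), (i,3*w), (i,4*w), a, b] \<subseteq> S" using c2S c3S c4S aS bS by auto
    moreover have "N a \<noteq> {}" using ne[OF N_sym[OF c3S a]] .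
    moreover have "N b \<noteq> {}" using ne[OF N_sym[OF c3S b]] .
    ultimately show ?thesis using n2 n3 n4' by (metis five_of')
  next
    case True
    show ?thesis
    proof (cases "a = (i,2*w) \<or> a = (i,5*w)")
      case True
      hence in25: "(i,2*w) \<in> N (i,3*w)" "(i,5*w) \<in> N (i,3*w)"
        using a b ba sh3_2 sh3_5 b_def by auto
      obtain z where z: "z \<in> N (i,4*w)" "z \<noteq> (i,2*w)" using N_other[OF c4S L5'] by blast
      have zS: "z \<in> S" "z \<noteq> (i,4*w)" using N_S[OF z(1)] N_ne[OF z(1)] by auto
      have n5: "N (i,5*w) \<noteq> {}" using ne[OF N_sym[OF c3S in25(2)]] .
      show ?thesis
      proof (cases "z \<in> {(i,w), (i,3*w), (i,5*w)}")
        case False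
        hence "distinct [(i,2*w), (i,3*w), (i,4*w), (i,5*w), z]" using zS z dd by auto
        moreover have "set [(i,2*w), (i,3*w), (i,4*w), (i,5*w), z] \<subseteq> S" using c2S c3S c4S c5S zS by auto
        moreover have "N z \<noteq> {}" using ne[OF N_sym[OF c4S z(1)]] .
        ultimately show ?thesis using n2 n3 n4' n5 by (metis five_of')
      next
        case True
        have "N (i,w) \<noteq> {}"
        proof -
          { assume "z = (i,w)"
            hence ?thesis using ne[OF N_sym[OF c4S z(1)]] by simp }
          moreover
          { assume "z = (i,3*w)"
            hence "(i,4*w) \<in> N (i,3*w)" using N_sym[OF c4S z(1)] by simp
            hence "(i,w) \<in> N (i,3*w)" using d1 sh3_4 by metis
            hence ?thesis using ne[OF N_sym[OF c3S]] by blast }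
          moreover
          { assume "z = (i,5*w)"
            hence "(i,w) \<in> N (i,2*w)" using d2 z(1) by simp
            hence ?thesis using ne[OF N_sym[OF c2S]] by blast }
          ultimately show ?thesis using True by blast
        qed
        moreover have "distinct [(i,w), (i,2*w), (i,3*w), (i,4*w), (i,5*w)]" using dd by auto
        moreover have "set [(i,w), (i,2*w), (i,3*w), (i,4*w), (i,5*w)] \<subseteq> S" using c1S c2S c3S c4S c5S by auto
        ultimately show ?thesis using n2 n3 n4' n5 by (metis five_of')
      qed
    next
      case False
      hence "a = (i,w) \<or> a = (i,4*w)" using \<open>a \<in> {(i,w), (i,2*w), (i,4*w), (i,5*w)}\<close> by blast
      hence in14: "(i,w) \<in> N (i,3*w)" "(i,4*w) \<in> N (i,3*w)"
        using a b ba sh3_1 sh3_4 b_def by auto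
      obtain y where y: "y \<in> N (i,2*w)" "y \<noteq> (i,4*w)" using N_other[OF c2S L5] by blast
      have yS: "y \<in> S" "y \<noteq> (i,2*w)" using N_S[OF y(1)] N_ne[OF y(1)] by auto
      have n1: "N (i,w) \<noteq> {}" using ne[OF N_sym[OF c3S in14(1)]] .
      show ?thesis
      proof (cases "y \<in> {(i,w), (i,3*w), (i,5*w)}")
        case False
        hence "distinct [(i,w), (i,2*w), (i,3*w), (i,4*w), y]" using yS y dd by auto
        moreover have "set [(i,w), (i,2*w), (i,3*w), (i,4*w), y] \<subseteq> S" using c1S c2S c3S c4S yS by auto
        moreover have "N y \<noteq> {}" using ne[OF N_sym[OF c2S y(1)]] .
        ultimately show ?thesis using n1 n2 n3 n4' by (metis five_of')
      next
        case True
        have "N (i,5*w) \<noteq> {}"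
        proof -
          { assume "y = (i,5*w)"
            hence ?thesis using ne[OF N_sym[OF c2S y(1)]] by simp }
          moreover
          { assume "y = (i,3*w)"
            hence "(i,2*w) \<in> N (i,3*w)" using N_sym[OF c2S y(1)] by simp
            hence "(i,5*w) \<in> N (i,3*w)" using d1 sh3_2 by metis
            hence ?thesis using ne[OF N_sym[OF c3S]] by blast }
          moreover
          { assume "y = (i,w)"
            hence "(i,5*w) \<in> N (i,4*w)" using d3 y(1) by simp
            hence ?thesis using ne[OF N_sym[OF c4S]] by blast }
          ultimately show ?thesis using True by blast
        qed
        moreover have "distinct [(i,w), (i,2*w), (i,3*w), (i,4*w), (i,5*w)]" using dd by auto
        moreover have "set [(i,w), (i,2*w), (i,3*w), (i,4*w), (i,5*w)] \<subseteq> S" using c1S c2S c3S c4S c5S by auto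
        ultimately show ?thesis using n1 n2 n3 n4' by (metis five_of')
      qed
    qed
  qed
qed

lemma Unc_ge: "10 \<le> card Unc"
proof -
  obtain V where V: "V \<subseteq> S" "5 \<le> card V" "\<forall>q\<in>V. N q \<noteq> {}" using five by blast
  have finV: "finite V" using V(1) finS finite_subset by blast
  have "Sigma V N \<subseteq> Unc" using V(1) by (auto simp: Unc_def)
  moreover have "finite Unc" unfolding Unc_def using finS N_fin by (intro finite_SigmaI) auto
  ultimately have "card (Sigma V N) \<le> card Unc" by (rule card_mono[rotated])
  moreover have "card (Sigma V N) = (\<Sum>q\<in>V. card (N q))" using finV N_fin by (simp add: card_SigmaI)
  moreover have "(\<Sum>q\<in>V. card (N q)) \<ge> (\<Sum>q\<in>V. 2)"
  proof (rule sum_mono)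
    fix q assume q: "q \<in> V"
    have "card (N q) \<noteq> 0" using V(3) q N_fin by auto
    moreover have "even (card (N q))" using N_even V(1) q by blast
    ultimately show "2 \<le> card (N q)" by presburger
  qed
  ultimately show ?thesis using V(2) by simp
qed

lemma row_bound: "6 * card P + 10 \<le> (u*v - 1) * (u*v - 1) - (u*v - 1)"
  using Cov_Unc card_Cov Unc_ge card_OP by simp

lemma P_Prow: "P = Prow i" by (simp add: P_def Prow_def)

end

lemma code_bound:
  fixes u v w k :: nat
  assumes code: "is_OOC2D u v 4 2 C" and vw: "v = 6*w" and w: "0 < w" and n: "u*v = 12*k"
  shows "4 * int (card C) \<le> int u * (24 * int k ^ 2 - 6 * int k - 2)"
proof -
  interpret ooc u v w C using assms by unfold_locales auto
  have n4: "(u*v) mod 4 = 0" using n by presburger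
  have row: "int (card (Prow i)) \<le> 24 * int k ^ 2 - 6 * int k - 2" if i: "i < u" for i
  proof -
    interpret ooc_row u v w C i using assms i n4 by unfold_locales auto
    have "6 * card (Prow i) + 10 \<le> (u*v - 1) * (u*v - 1) - (u*v - 1)"
      using row_bound unfolding P_Prow by simp
    hence h: "6 * int (card (Prow i)) + 10 \<le> int ((u*v - 1) * (u*v - 1) - (u*v - 1))" by linarith
    have k1: "1 \<le> k" using nge n by simp
    define m where "m = u*v - 1"
    have m: "int m = 12 * int k - 1" using k1 n by (simp add: m_def of_nat_diff)
    have "m \<le> m*m" by (cases m) auto
    hence "int (m*m - m) = int m * int m - int m" by (simp add: of_nat_diff)
    hence "int ((u*v - 1) * (u*v - 1) - (u*v - 1)) = (12 * int k - 1) * (12 * int k - 1) - (12 * int k - 1)"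
      using m unfolding m_def by simp
    also have "\<dots> = 6 * (24 * int k ^ 2 - 6 * int k - 2) + 14" by (simp add: algebra_simps power2_eq_square)
    finally have "6 * int (card (Prow i)) \<le> 6 * (24 * int k ^ 2 - 6 * int k - 2) + 4" using h by linarith
    moreover have "\<And>a b::int. 6*a \<le> 6*b + 4 \<Longrightarrow> a \<le> b" by presburger
    ultimately show ?thesis by metis
  qed
  have "4 * int (card C) = int (\<Sum>i<u. card (Prow i))" using sum_Prow by simp
  also have "\<dots> = (\<Sum>i<u. int (card (Prow i)))" by (rule of_nat_sum)
  also have "\<dots> \<le> (\<Sum>i<u. 24 * int k ^ 2 - 6 * int k - 2)" by (rule sum_mono) (use row in auto)
  also have "\<dots> = int u * (24 * int k ^ 2 - 6 * int k - 2)" by simp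
  finally show ?thesis .
qed

theorem lemma5p3:
  fixes u v :: nat
  assumes "u > 0" and "v > 0" and "(u * v) mod 12 = 0" and "v mod 6 = 0"
  shows "int (Phi u v 4 2) \<le>
    \<lfloor>(real u / 4) * (real_of_int \<lfloor>(real (u * v) - 1) / 3 * real_of_int \<lfloor>(real (u * v) - 2) / 2\<rfloor>\<rfloor> - 2)\<rfloor>"
proof -
  define w where "w = v div 6"
  have vw: "v = 6*w" using assms(4) unfolding w_def by presburger
  have w: "0 < w" using vw assms(2) by simp
  define k where "k = u*v div 12"
  have n: "u*v = 12*k" using assms(3) unfolding k_def by presburger
  have nr: "real (u*v) = 12 * real k" using n by (metis of_nat_mult of_nat_numeral)
  have f1: "\<lfloor>(real (u * v) - 2) / 2\<rfloor> = 6 * int k - 1"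
  proof -
    have "(real (u * v) - 2) / 2 = real_of_int (6 * int k - 1)" using nr by simp
    thus ?thesis by (metis floor_of_int)
  qed
  have f2: "\<lfloor>(real (u * v) - 1) / 3 * real_of_int \<lfloor>(real (u * v) - 2) / 2\<rfloor>\<rfloor> = 24 * int k ^ 2 - 6 * int k"
  proof -
    have "(real (u * v) - 1) / 3 * real_of_int \<lfloor>(real (u * v) - 2) / 2\<rfloor>
        = real_of_int (24 * int k ^ 2 - 6 * int k) + 1/3"
      unfolding f1 using nr by (simp add: field_simps power2_eq_square)
    thus ?thesis by (intro floor_unique) simp_all
  qed
  define F where "F = \<lfloor>(real u / 4) * (real_of_int (24 * int k ^ 2 - 6 * int k) - 2)\<rfloor>"
  have bnd: "int (card C) \<le> F" if "is_OOC2D u v 4 2 C" for C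
  proof -
    have h: "4 * int (card C) \<le> int u * (24 * int k ^ 2 - 6 * int k - 2)"
      by (rule code_bound[OF that vw w n])
    have "real (card C) \<le> real u / 4 * (real_of_int (24 * int k ^ 2 - 6 * int k) - 2)"
    proof -
      have "real_of_int (4 * int (card C)) \<le> real_of_int (int u * (24 * int k ^ 2 - 6 * int k - 2))"
        using h by (simp only: of_int_le_iff)
      thus ?thesis by simp
    qed
    thus ?thesis unfolding F_def by (simp add: le_floor_iff)
  qed
  have e: "is_OOC2D u v 4 2 {}" by (simp add: is_OOC2D_def)
  have F0: "0 \<le> F" using bnd[OF e] by simp
  have "Phi u v 4 2 \<le> nat F"
    unfolding Phi_def
  proof (rule cSup_least)
    show "card ` {C. is_OOC2D u v 4 2 C} \<noteq> {}" using e by blast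
  next
    fix x assume "x \<in> card ` {C. is_OOC2D u v 4 2 C}"
    then obtain C where "is_OOC2D u v 4 2 C" "x = card C" by blast
    thus "x \<le> nat F" using bnd by fastforce
  qed
  hence "int (Phi u v 4 2) \<le> F" using F0 by linarith
  thus ?thesis unfolding f2 F_def .
qed

end
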